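(* Let $X=(X_1,\dots,X_p)$ be generated by a QVF-DAG model with DAG $\mathcal G=(\mathcal V,\mathcal E)$, and assume Condition 1 holds. Fix a node $j\in\mathcal V$ with $\beta_{j2}>-1$. Then for every set $\mathcal S\subseteq \mathrm{nd}_j$, $$E\big[\mathrm{Var}(\omega_j(\mathcal S)X_j\mid X_{\mathcal S})\big]\;\ge\; E\big[\omega_j(\mathcal S)X_j\big],$$ and equality holds if and only if $\mathrm{pa}_j\subseteq\mathcal S$.
   Context: A DAG $\mathcal G=(\mathcal V,\mathcal E)$ on $\mathcal V=\{1,\dots,p\}$; $\mathrm{pa}_j$ is the set of parents of node $j$, and $\mathrm{nd}_j$ is the set of non-descendants of $j$ excluding $j$ itself. For $\mathcal S\subseteq\mathcal V$, $X_{\mathcal S}=(X_k)_{k\in\mathcal S}$ (with $X_\emptyset$ trivial, so conditioning on it is unconditional). The joint law of $X$ is Markov with respect to $\mathcal G$, i.e. $P(X)=\prod_{j\in\mathcal V}P(X_j\mid X_{\mathrm{pa}_j})$. QVF property: for each $j$ there are constants $\beta_{j1},\beta_{j2}$ with $\mathrm{Var}(X_j\mid X_{\mathrm{pa}_j})=\beta_{j1}E[X_j\mid X_{\mathrm{pa}_j}]+\beta_{j2}\big(E[X_j\mid X_{\mathrm{pa}_j}]\big)^2$. All moments appearing are assumed finite. For $\mathcal S\subseteq\mathrm{nd}_j$ define $\omega_j(\mathcal S)=\big(\beta_{j1}+\beta_{j2}E[X_j\mid X_{\mathcal S}]\big)^{-1}$. Condition 1: for every node $j$ and every $\mathcal S\subseteq\mathrm{nd}_j$,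 $\beta_{j1}+\beta_{j2}E[X_j\mid X_{\mathcal S}]\neq 0$ almost surely (so $\omega_j(\mathcal S)$ is well defined), and whenever $\mathrm{pa}_j\not\subseteq\mathcal S\subseteq\mathrm{nd}_j$, one has $E\big[\omega_j^2(\mathcal S)\,\mathrm{Var}\big(E[X_j\mid X_{\mathrm{pa}_j}]\mid X_{\mathcal S}\big)\big]>0$. *)

theory Defs
  imports "HOL-Probability.Probability"
begin

definition parents :: "(nat \<times> nat) set \<Rightarrow> nat \<Rightarrow> nat set" where
  "parents E j = {i. (i, j) \<in> E}"

definition descendants :: "(nat \<times> nat) set \<Rightarrow> nat \<Rightarrow> nat set" where
  "descendants E j = {k. (j, k) \<in> E\<^sup>+}"

definition nondesc :: "nat set \<Rightarrow> (nat \<times> nat) set \<Rightarrow> nat \<Rightarrow> nat set" where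
  "nondesc V E j = V - descendants E j - {j}"

definition is_dag :: "nat set \<Rightarrow> (nat \<times> nat) set \<Rightarrow> bool" where
  "is_dag V E \<longleftrightarrow> finite V \<and> E \<subseteq> V \<times> V \<and> acyclic E"

text \<open>The sigma-algebra generated by X_S = (X_k)_{k in S}; for S = {} it is the
  trivial sigma-algebra {{}, space M}.\<close>
definition gen_sigma :: "'a measure \<Rightarrow> (nat \<Rightarrow> 'a \<Rightarrow> real) \<Rightarrow> nat set \<Rightarrow> 'a measure" where
  "gen_sigma M X S = sigma (space M) {X k -` B \<inter> space M | k B. k \<in> S \<and> B \<in> sets borel}"

definition cexp :: "'a measure \<Rightarrow> (nat \<Rightarrow> 'a \<Rightarrow> real) \<Rightarrow> nat set \<Rightarrow> ('a \<Rightarrow> real) \<Rightarrow> 'a \<Rightarrow> real" where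
  "cexp M X S Y = real_cond_exp M (gen_sigma M X S) Y"

definition cvar :: "'a measure \<Rightarrow> (nat \<Rightarrow> 'a \<Rightarrow> real) \<Rightarrow> nat set \<Rightarrow> ('a \<Rightarrow> real) \<Rightarrow> 'a \<Rightarrow> real" where
  "cvar M X S Y = (\<lambda>x. cexp M X S (\<lambda>w. (Y w)\<^sup>2) x - (cexp M X S Y x)\<^sup>2)"

text \<open>Markov property w.r.t. the DAG (directed local Markov property, equivalent to
  the factorization P(X) = prod_j P(X_j | X_pa_j)): the conditional law of X_j given
  X_{nd_j} coincides a.s. with its conditional law given X_{pa_j}.\<close>
definition dag_markov :: "'a measure \<Rightarrow> nat set \<Rightarrow> (nat \<times> nat) set \<Rightarrow> (nat \<Rightarrow> 'a \<Rightarrow> real) \<Rightarrow> bool" where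
  "dag_markov M V E X \<longleftrightarrow>
     (\<forall>j\<in>V. \<forall>B\<in>sets borel.
        AE x in M. cexp M X (nondesc V E j) (\<lambda>w. indicator B (X j w)) x
                 = cexp M X (parents E j) (\<lambda>w. indicator B (X j w)) x)"

definition qvf :: "'a measure \<Rightarrow> nat set \<Rightarrow> (nat \<times> nat) set \<Rightarrow> (nat \<Rightarrow> 'a \<Rightarrow> real)
                    \<Rightarrow> (nat \<Rightarrow> real) \<Rightarrow> (nat \<Rightarrow> real) \<Rightarrow> bool" where
  "qvf M V E X b1 b2 \<longleftrightarrow>
     (\<forall>j\<in>V. AE x in M. cvar M X (parents E j) (X j) x
        = b1 j * cexp M X (parents E j) (X j) x + b2 j * (cexp M X (parents E j) (X j) x)\<^sup>2)"

definition omega :: "'a measure \<Rightarrow> (nat \<Rightarrow> 'a \<Rightarrow> real) \<Rightarrow> (nat \<Rightarrow> real) \<Rightarrow> (nat \<Rightarrow> real)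
                      \<Rightarrow> nat \<Rightarrow> nat set \<Rightarrow> 'a \<Rightarrow> real" where
  "omega M X b1 b2 j S = (\<lambda>x. 1 / (b1 j + b2 j * cexp M X S (X j) x))"

definition condition1 :: "'a measure \<Rightarrow> nat set \<Rightarrow> (nat \<times> nat) set \<Rightarrow> (nat \<Rightarrow> 'a \<Rightarrow> real)
                    \<Rightarrow> (nat \<Rightarrow> real) \<Rightarrow> (nat \<Rightarrow> real) \<Rightarrow> bool" where
  "condition1 M V E X b1 b2 \<longleftrightarrow>
     (\<forall>j\<in>V. \<forall>S. S \<subseteq> nondesc V E j \<longrightarrow>
        (AE x in M. b1 j + b2 j * cexp M X S (X j) x \<noteq> 0) \<and>
        (\<not> parents E j \<subseteq> S \<longrightarrow>
           prob_space.expectation M (\<lambda>x. (omega M X b1 b2 j S x)\<^sup>2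
              * cvar M X S (cexp M X (parents E j) (X j)) x) > 0))"

end

theory Submission
  imports Defs
begin


lemma gs_space: "space (gen_sigma M X S) = space M"
  unfolding gen_sigma_def by (simp add: space_measure_of_conv)

lemma gs_sets: "sets (gen_sigma M X S) = sigma_sets (space M) {X k -` B \<inter> space M | k B. k \<in> S \<and> B \<in> sets borel}"
  unfolding gen_sigma_def by (rule sets_measure_of) auto

lemma gs_subalg:
  assumes "\<And>k. k \<in> S \<Longrightarrow> X k \<in> borel_measurable M"
  shows "subalgebra M (gen_sigma M X S)"
  unfolding subalgebra_def gs_space gs_sets
  using assms by (auto intro!: sets.sigma_sets_subset measurable_sets)

lemma gs_mono:
  assumes "S \<subseteq> T"
  shows "subalgebra (gen_sigma M X T) (gen_sigma M X S)"
  unfolding subalgebra_def gs_space gs_sets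
  using assms by (intro conjI refl sigma_sets_mono') auto

lemma gs_sfs:
  assumes "prob_space M" "\<And>k. k \<in> S \<Longrightarrow> X k \<in> borel_measurable M"
  shows "sigma_finite_subalgebra M (gen_sigma M X S)"
proof -
  interpret prob_space M by fact
  have "finite_measure_subalgebra M (gen_sigma M X S)"
    by unfold_locales (rule gs_subalg[OF assms(2)])
  then show ?thesis by (rule finite_measure_subalgebra_is_sigma_finite)
qed



lemma dens_eq:
  fixes Y :: "'a \<Rightarrow> real" and g1 g2 f :: "_ \<Rightarrow> real"
  assumes fm: "finite_measure M"
    and [measurable]: "Y \<in> borel_measurable M" "g1 \<in> borel_measurable M" "g2 \<in> borel_measurable M"
    and b1: "AE x in M. 0 \<le> g1 x \<and> g1 x \<le> 1" and b2: "AE x in M. 0 \<le> g2 x \<and> g2 x \<le> 1"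
    and eq: "\<And>B. B \<in> sets borel \<Longrightarrow> (\<integral>x. g1 x * indicator B (Y x) \<partial>M) = (\<integral>x. g2 x * indicator B (Y x) \<partial>M)"
    and [measurable]: "f \<in> borel_measurable borel"
  shows "(\<integral>x. g1 x * f (Y x) \<partial>M) = (\<integral>x. g2 x * f (Y x) \<partial>M)"
proof -
  interpret finite_measure M by fact
  have em: "emeasure (distr (density M g) borel Y) B = ennreal (\<integral>x. g x * indicator B (Y x) \<partial>M)"
    if [measurable]: "g \<in> borel_measurable M" and bg: "AE x in M. 0 \<le> g x \<and> g x \<le> 1"
      and B[measurable]: "B \<in> sets borel" for g B
  proof -
    have Ym: "Y \<in> measurable (density M g) borel" by simp
    have "emeasure (distr (density M g) borel Y) B = emeasure (density M g) (Y -` B \<inter> space (density M g))"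
      by (rule emeasure_distr[OF Ym B])
    also have "\<dots> = (\<integral>\<^sup>+ x. ennreal (g x) * indicator (Y -` B \<inter> space M) x \<partial>M)"
      by (simp add: emeasure_density)
    also have "\<dots> = (\<integral>\<^sup>+ x. ennreal (g x * indicator B (Y x)) \<partial>M)"
      by (rule nn_integral_cong) (auto split: split_indicator)
    also have "\<dots> = ennreal (\<integral>x. g x * indicator B (Y x) \<partial>M)"
    proof (rule nn_integral_eq_integral)
      show "integrable M (\<lambda>x. g x * indicator B (Y x))"
        by (rule Bochner_Integration.integrable_bound[OF integrable_const[of "1::real"]]) (use bg in \<open>auto split: split_indicator elim!: AE_mp\<close>)
      show "AE x in M. 0 \<le> g x * indicator B (Y x)"
        using bg by eventually_elim (auto split: split_indicator)
    qed
    finally show ?thesis .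
  qed
  have N: "distr (density M g1) borel Y = distr (density M g2) borel Y"
    by (rule measure_eqI) (simp_all add: em[OF _ b1] em[OF _ b2] eq)
  have "(\<integral>x. g1 x * f (Y x) \<partial>M) = integral\<^sup>L (density M g1) (\<lambda>x. f (Y x))"
    using b1 by (subst integral_density) (auto elim: AE_mp)
  also have "\<dots> = integral\<^sup>L (distr (density M g1) borel Y) f"
    by (subst integral_distr) auto
  also have "\<dots> = integral\<^sup>L (distr (density M g2) borel Y) f" by (simp add: N)
  also have "\<dots> = integral\<^sup>L (density M g2) (\<lambda>x. f (Y x))"
    by (subst integral_distr) auto
  also have "\<dots> = (\<integral>x. g2 x * f (Y x) \<partial>M)"
    using b2 by (subst integral_density) (auto elim: AE_mp)
  finally show ?thesis .
qed



context sigma_finite_subalgebra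
begin

lemma ind_bounds:
  assumes fm: "finite_measure M" and A: "A \<in> sets M"
  shows "AE x in M. 0 \<le> real_cond_exp M F (indicator A) x \<and> real_cond_exp M F (indicator A) x \<le> 1"
proof -
  interpret fmM: finite_measure M by fact
  have "AE x in M. 0 \<le> real_cond_exp M F (indicator A) x"
    by (rule real_cond_exp_pos) (auto simp: A borel_measurable_indicator)
  moreover have "AE x in M. real_cond_exp M F (indicator A) x \<le> real_cond_exp M F (\<lambda>_. 1) x"
    by (rule real_cond_exp_mono) (auto simp: A integrable_indicator_iff less_top[symmetric] fmM.emeasure_finite)
  moreover have "AE x in M. real_cond_exp M F (\<lambda>_. 1::real) x = 1"
    by (rule real_cond_exp_F_meas) auto
  ultimately show ?thesis by eventually_elim auto
qed

lemma keyK: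
  assumes fm: "finite_measure M" and A[measurable]: "A \<in> sets M"
    and g: "integrable M g"
  shows "(\<integral>x. indicator A x * real_cond_exp M F g x \<partial>M)
       = (\<integral>x. real_cond_exp M F (indicator A) x * g x \<partial>M)"
proof -
  have [measurable]: "g \<in> borel_measurable M" using g by auto
  define h where "h = real_cond_exp M F (indicator A)"
  define c where "c = real_cond_exp M F g"
  have [measurable]: "h \<in> borel_measurable F" "c \<in> borel_measurable F"
    "h \<in> borel_measurable M" "c \<in> borel_measurable M" unfolding h_def c_def by auto
  have ci: "integrable M c" unfolding c_def using g by auto
  have hb: "AE x in M. 0 \<le> h x \<and> h x \<le> 1" unfolding h_def by (rule ind_bounds[OF fm A])
  have i1: "integrable M (\<lambda>x. c x * indicator A x)"
    using integrable_mult_indicator[OF A ci] by (simp add: mult.commute)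
  have i2: "integrable M (\<lambda>x. h x * g x)"
    by (rule Bochner_Integration.integrable_bound[OF g]) (use hb in \<open>auto elim!: AE_mp simp: abs_mult intro!: mult_left_le_one_le\<close>)
  have "(\<integral>x. indicator A x * c x \<partial>M) = (\<integral>x. c x * indicator A x \<partial>M)" by (simp add: mult.commute)
  also have "\<dots> = (\<integral>x. c x * h x \<partial>M)" unfolding h_def
    by (rule real_cond_exp_intg(2)[symmetric]) (use i1 in auto)
  also have "\<dots> = (\<integral>x. h x * c x \<partial>M)" by (simp add: mult.commute)
  also have "\<dots> = (\<integral>x. h x * g x \<partial>M)" unfolding c_def
    by (rule real_cond_exp_intg(2)) (use i2 in auto)
  finally show ?thesis unfolding h_def c_def .
qed

end



lemma markov_ext:
  assumes P: "prob_space M" and meas: "\<And>k. k \<in> Nd \<Longrightarrow> X k \<in> borel_measurable M"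
    and sub: "Pa \<subseteq> Nd" and Xj[measurable]: "X j \<in> borel_measurable M"
    and mk: "\<And>B. B \<in> sets borel \<Longrightarrow> AE x in M. cexp M X Nd (\<lambda>w. indicator B (X j w)) x
                                    = cexp M X Pa (\<lambda>w. indicator B (X j w)) x"
    and f[measurable]: "f \<in> borel_measurable borel" and gi: "integrable M (\<lambda>w. f (X j w))"
  shows "AE x in M. cexp M X Nd (\<lambda>w. f (X j w)) x = cexp M X Pa (\<lambda>w. f (X j w)) x"
proof -
  interpret prob_space M by fact
  interpret N: sigma_finite_subalgebra M "gen_sigma M X Nd" by (rule gs_sfs[OF P meas])
  interpret Q: sigma_finite_subalgebra M "gen_sigma M X Pa" by (rule gs_sfs[OF P meas]) (use sub in auto)
  have fm: "finite_measure M" by (rule finite_measure_axioms)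
  let ?FN = "gen_sigma M X Nd" and ?FP = "gen_sigma M X Pa"
  show ?thesis unfolding cexp_def
  proof (rule N.real_cond_exp_charact)
    show "integrable M (\<lambda>w. f (X j w))" by fact
    show "integrable M (real_cond_exp M ?FP (\<lambda>w. f (X j w)))" using gi by auto
    show "real_cond_exp M ?FP (\<lambda>w. f (X j w)) \<in> borel_measurable ?FN"
      by (rule measurable_from_subalg[OF gs_mono[OF sub]]) simp
    fix A assume AF: "A \<in> sets ?FN"
    then have A[measurable]: "A \<in> sets M" using N.subalg unfolding subalgebra_def by auto
    define h where "h = real_cond_exp M ?FP (indicator A)"
    have [measurable]: "h \<in> borel_measurable M" unfolding h_def by simp
    have hb: "AE x in M. 0 \<le> h x \<and> h x \<le> 1" unfolding h_def by (rule Q.ind_bounds[OF fm A])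
    have ib: "AE x in M. 0 \<le> (indicator A x::real) \<and> indicator A x \<le> (1::real)" by (intro AE_I2) (auto split: split_indicator)
    have eqB: "(\<integral>x. indicator A x * (indicator B (X j x)::real) \<partial>M) = (\<integral>x. h x * indicator B (X j x) \<partial>M)"
      if B[measurable]: "B \<in> sets borel" for B
    proof -
      have ii: "integrable M (\<lambda>w. indicator B (X j w) :: real)"
        by (rule integrable_const_bound[where B=1]) (auto split: split_indicator)
      have "(\<integral>x. indicator A x * (indicator B (X j x)::real) \<partial>M)
          = (\<integral>x\<in>A. (indicator B (X j x)::real) \<partial>M)" by (simp add: set_lebesgue_integral_def)
      also have "\<dots> = (\<integral>x\<in>A. real_cond_exp M ?FN (\<lambda>w. indicator B (X j w)) x \<partial>M)"
        by (rule N.real_cond_exp_intA[OF ii AF])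
      also have "\<dots> = (\<integral>x. indicator A x * real_cond_exp M ?FP (\<lambda>w. indicator B (X j w)) x \<partial>M)"
        unfolding set_lebesgue_integral_def
        by (rule integral_cong_AE) (use mk[OF B] in \<open>auto simp: cexp_def elim!: AE_mp\<close>)
      also have "\<dots> = (\<integral>x. h x * indicator B (X j x) \<partial>M)"
        unfolding h_def by (rule Q.keyK[OF fm A ii])
      finally show ?thesis .
    qed
    have "(\<integral>x\<in>A. f (X j x) \<partial>M) = (\<integral>x. indicator A x * f (X j x) \<partial>M)"
      by (simp add: set_lebesgue_integral_def)
    also have "\<dots> = (\<integral>x. h x * f (X j x) \<partial>M)"
      by (rule dens_eq[OF fm Xj _ _ ib hb eqB f]) auto
    also have "\<dots> = (\<integral>x. indicator A x * real_cond_exp M ?FP (\<lambda>w. f (X j w)) x \<partial>M)"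
      unfolding h_def by (rule Q.keyK[OF fm A gi, symmetric])
    also have "\<dots> = (\<integral>x\<in>A. real_cond_exp M ?FP (\<lambda>w. f (X j w)) x \<partial>M)"
      by (simp add: set_lebesgue_integral_def)
    finally show "(\<integral>x\<in>A. f (X j x) \<partial>M) = (\<integral>x\<in>A. real_cond_exp M ?FP (\<lambda>w. f (X j w)) x \<partial>M)" .
  qed
qed



lemma alg:
  fixes w a c s2 e2 b1 b2 q r :: real
  assumes "w * (b1 + b2 * a) = 1" "a = c" "e2 = b1 * c + (1 + b2) * s2" "q = w * a" "r = w\<^sup>2 * e2"
  shows "r - q\<^sup>2 = w * a + (1 + b2) * (w\<^sup>2 * (s2 - c\<^sup>2))"
proof -
  have h: "w\<^sup>2 * a * (b1 + b2 * a) = w * a"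
  proof -
    have "w\<^sup>2 * a * (b1 + b2 * a) = w * a * (w * (b1 + b2 * a))" by (simp add: power2_eq_square algebra_simps)
    also have "\<dots> = w * a" using assms(1) by simp
    finally show ?thesis .
  qed
  have "r - q\<^sup>2 - (w * a + (1 + b2) * (w\<^sup>2 * (s2 - c\<^sup>2))) = w\<^sup>2 * a * (b1 + b2 * a) - w * a"
    unfolding assms(3-5) assms(2)[symmetric] by (simp add: power2_eq_square algebra_simps)
  then show ?thesis using h by simp
qed

theorem lemma1:
  fixes M :: "'a measure" and p :: nat and E :: "(nat \<times> nat) set"
    and X :: "nat \<Rightarrow> 'a \<Rightarrow> real" and b1 b2 :: "nat \<Rightarrow> real" and j :: nat
  assumes "prob_space M"
    and "is_dag {1..p} E"
    and "\<And>k. k \<in> {1..p} \<Longrightarrow> X k \<in> borel_measurable M"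
    and "dag_markov M {1..p} E X"
    and "qvf M {1..p} E X b1 b2"
    and "condition1 M {1..p} E X b1 b2"
    \<comment> \<open>finiteness of the moments appearing\<close>
    and "\<And>k. k \<in> {1..p} \<Longrightarrow> integrable M (\<lambda>x. (X k x)\<^sup>2)"
    and "\<And>S. S \<subseteq> nondesc {1..p} E j \<Longrightarrow>
           integrable M (\<lambda>x. (omega M X b1 b2 j S x * X j x)\<^sup>2)"
    and "\<And>S. S \<subseteq> nondesc {1..p} E j \<Longrightarrow>
           integrable M (\<lambda>x. (omega M X b1 b2 j S x)\<^sup>2
              * cvar M X S (cexp M X (parents E j) (X j)) x)"
    and "j \<in> {1..p}"
    and "b2 j > -1"
    and "S \<subseteq> nondesc {1..p} E j"
  shows "prob_space.expectation M (\<lambda>x. cvar M X S (\<lambda>w. omega M X b1 b2 j S w * X j w) x)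
           \<ge> prob_space.expectation M (\<lambda>x. omega M X b1 b2 j S x * X j x)
       \<and> (prob_space.expectation M (\<lambda>x. cvar M X S (\<lambda>w. omega M X b1 b2 j S w * X j w) x)
           = prob_space.expectation M (\<lambda>x. omega M X b1 b2 j S x * X j x)
          \<longleftrightarrow> parents E j \<subseteq> S)"
proof -
  note P = assms(1)
  interpret prob_space M by fact
  let ?V = "{1..p::nat}"
  let ?Nd = "nondesc ?V E j" and ?Pa = "parents E j"
  have meas: "\<And>k. k \<in> ?V \<Longrightarrow> X k \<in> borel_measurable M" by fact
  have jV: "j \<in> ?V" by fact
  have dag: "E \<subseteq> ?V \<times> ?V" "acyclic E" using assms(2) unfolding is_dag_def by auto
  have NdV: "?Nd \<subseteq> ?V" unfolding nondesc_def by auto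
  have PaNd: "?Pa \<subseteq> ?Nd"
  proof
    fix i assume i: "i \<in> ?Pa"
    then have ij: "(i, j) \<in> E" unfolding parents_def by auto
    then have "i \<in> ?V" using dag(1) by auto
    moreover have "i \<noteq> j" using ij dag(2) unfolding acyclic_def by auto
    moreover have "(j, i) \<notin> E\<^sup>+"
    proof
      assume "(j, i) \<in> E\<^sup>+"
      then have "(j, j) \<in> E\<^sup>+" using ij by (rule trancl_into_trancl)
      then show False using dag(2) unfolding acyclic_def by auto
    qed
    ultimately show "i \<in> ?Nd" unfolding nondesc_def descendants_def by auto
  qed
  have SNd: "S \<subseteq> ?Nd" by fact
  have SV: "S \<subseteq> ?V" using SNd NdV by auto
  have PaV: "?Pa \<subseteq> ?V" using PaNd NdV by auto
  have measNd: "\<And>k. k \<in> ?Nd \<Longrightarrow> X k \<in> borel_measurable M" using meas NdV by auto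
  have Y[measurable]: "X j \<in> borel_measurable M" using meas jV by auto
  interpret SS: sigma_finite_subalgebra M "gen_sigma M X S" by (rule gs_sfs[OF P meas]) (use SV in auto)
  interpret QQ: sigma_finite_subalgebra M "gen_sigma M X ?Pa" by (rule gs_sfs[OF P meas]) (use PaV in auto)
  interpret NN: sigma_finite_subalgebra M "gen_sigma M X ?Nd" by (rule gs_sfs[OF P meas]) (use NdV in auto)
  let ?FS = "gen_sigma M X S" and ?FP = "gen_sigma M X ?Pa" and ?FN = "gen_sigma M X ?Nd"
  have mk: "\<And>B. B \<in> sets borel \<Longrightarrow> AE x in M. cexp M X ?Nd (\<lambda>w. indicator B (X j w)) x
                                    = cexp M X ?Pa (\<lambda>w. indicator B (X j w)) x"
    using assms(4) jV unfolding dag_markov_def by auto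
  have tower: "AE x in M. real_cond_exp M ?FS (\<lambda>w. f (X j w)) x
      = real_cond_exp M ?FS (real_cond_exp M ?FP (\<lambda>w. f (X j w))) x"
    if f[measurable]: "f \<in> borel_measurable borel" and gi: "integrable M (\<lambda>w. f (X j w))" for f
  proof -
    have "AE x in M. real_cond_exp M ?FS (real_cond_exp M ?FN (\<lambda>w. f (X j w))) x
        = real_cond_exp M ?FS (\<lambda>w. f (X j w)) x"
      by (rule SS.real_cond_exp_nested_subalg[OF NN.subalg gs_mono[OF SNd] gi])
    moreover have "AE x in M. real_cond_exp M ?FS (real_cond_exp M ?FN (\<lambda>w. f (X j w))) x
        = real_cond_exp M ?FS (real_cond_exp M ?FP (\<lambda>w. f (X j w))) x"
    proof -
      have mx: "AE x in M. real_cond_exp M ?FN (\<lambda>w. f (X j w)) x = real_cond_exp M ?FP (\<lambda>w. f (X j w)) x"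
        using markov_ext[OF P measNd PaNd Y mk f gi] by (simp only: cexp_def)
      show ?thesis
        by (rule SS.real_cond_exp_cong[OF mx borel_measurable_cond_exp2 borel_measurable_cond_exp2])
    qed
    ultimately show ?thesis by eventually_elim auto
  qed
  let ?mS = "real_cond_exp M ?FS (X j)" and ?m = "real_cond_exp M ?FP (X j)"
  define w where "w = (\<lambda>x. 1 / (b1 j + b2 j * real_cond_exp M ?FS (X j) x))"
  have w_eq: "omega M X b1 b2 j S = w" unfolding w_def omega_def cexp_def by simp
  have [measurable]: "w \<in> borel_measurable ?FS" unfolding w_def by measurable
  have [measurable]: "w \<in> borel_measurable M" unfolding w_def by measurable
  have sqb: "\<bar>y\<bar> \<le> 1 + y\<^sup>2" for y :: real
  proof -
    have "0 \<le> (\<bar>y\<bar> - 1)\<^sup>2" by simp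
    then have "2 * \<bar>y\<bar> \<le> 1 + y\<^sup>2" by (simp add: power2_eq_square algebra_simps abs_mult_self_eq)
    then show ?thesis by simp
  qed
  have sqint: "integrable M (g::'a\<Rightarrow>real)" if gm[measurable]: "g \<in> borel_measurable M" and gi: "integrable M (\<lambda>x. (g x)\<^sup>2)" for g
    by (rule Bochner_Integration.integrable_bound[of _ "\<lambda>x. 1 + (g x)\<^sup>2::real"])
       (use gi in \<open>auto intro!: sqb\<close>)
  have iY2: "integrable M (\<lambda>x. (X j x)\<^sup>2)" using assms(7) jV by auto
  have iY: "integrable M (X j)" by (rule sqint[OF Y iY2])
  have iwY2: "integrable M (\<lambda>x. (w x * X j x)\<^sup>2)" using assms(8)[OF SNd] w_eq by simp
  have iwY: "integrable M (\<lambda>x. w x * X j x)" by (rule sqint[OF _ iwY2]) simp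
  have iw2Y2: "integrable M (\<lambda>x. (w x)\<^sup>2 * (X j x)\<^sup>2)" using iwY2 by (simp add: power_mult_distrib)
  have qv: "AE x in M. real_cond_exp M ?FP (\<lambda>w. (X j w)\<^sup>2) x = b1 j * ?m x + (1 + b2 j) * (?m x)\<^sup>2"
    using assms(5) jV unfolding qvf_def cvar_def cexp_def by (auto elim!: AE_mp simp: algebra_simps)
  have iPY2: "integrable M (real_cond_exp M ?FP (\<lambda>w. (X j w)\<^sup>2))" using iY2 by auto
  have im: "integrable M ?m" using iY by auto
  have im2: "integrable M (\<lambda>x. (?m x)\<^sup>2)"
  proof -
    have "integrable M (\<lambda>x. (real_cond_exp M ?FP (\<lambda>w. (X j w)\<^sup>2) x - b1 j * ?m x) / (1 + b2 j))"
      using iPY2 im by auto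
    moreover have "AE x in M. (real_cond_exp M ?FP (\<lambda>w. (X j w)\<^sup>2) x - b1 j * ?m x) / (1 + b2 j) = (?m x)\<^sup>2"
      using qv by eventually_elim (use assms(11) in \<open>simp add: field_simps\<close>)
    ultimately show ?thesis by (subst integrable_cong_AE[symmetric]) auto
  qed
  have T1: "AE x in M. ?mS x = real_cond_exp M ?FS ?m x"
    using tower[of "\<lambda>y. y"] iY by simp
  have T2: "AE x in M. real_cond_exp M ?FS (\<lambda>w. (X j w)\<^sup>2) x
      = real_cond_exp M ?FS (real_cond_exp M ?FP (\<lambda>w. (X j w)\<^sup>2)) x"
    using tower[of "\<lambda>y. y\<^sup>2"] iY2 by simp
  have A1: "AE x in M. real_cond_exp M ?FS (\<lambda>x. w x * X j x) x = w x * ?mS x"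
    by (rule SS.real_cond_exp_mult) (use iwY in auto)
  have A2: "AE x in M. real_cond_exp M ?FS (\<lambda>x. (w x * X j x)\<^sup>2) x
      = (w x)\<^sup>2 * real_cond_exp M ?FS (\<lambda>x. (X j x)\<^sup>2) x"
  proof -
    have "(\<lambda>x. (w x * X j x)\<^sup>2) = (\<lambda>x. (w x)\<^sup>2 * (X j x)\<^sup>2)" by (simp add: power_mult_distrib)
    moreover have "AE x in M. real_cond_exp M ?FS (\<lambda>x. (w x)\<^sup>2 * (X j x)\<^sup>2) x
      = (w x)\<^sup>2 * real_cond_exp M ?FS (\<lambda>x. (X j x)\<^sup>2) x"
      by (rule SS.real_cond_exp_mult) (use iw2Y2 in auto)
    ultimately show ?thesis by simp
  qed
  have A3: "AE x in M. real_cond_exp M ?FS (real_cond_exp M ?FP (\<lambda>w. (X j w)\<^sup>2)) x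
      = real_cond_exp M ?FS (\<lambda>x. b1 j * ?m x + (1 + b2 j) * (?m x)\<^sup>2) x"
    by (rule SS.real_cond_exp_cong[OF qv]) auto
  have A4: "AE x in M. real_cond_exp M ?FS (\<lambda>x. b1 j * ?m x + (1 + b2 j) * (?m x)\<^sup>2) x
      = b1 j * real_cond_exp M ?FS ?m x + (1 + b2 j) * real_cond_exp M ?FS (\<lambda>x. (?m x)\<^sup>2) x"
  proof -
    have "AE x in M. real_cond_exp M ?FS (\<lambda>x. b1 j * ?m x + (1 + b2 j) * (?m x)\<^sup>2) x
      = real_cond_exp M ?FS (\<lambda>x. b1 j * ?m x) x + real_cond_exp M ?FS (\<lambda>x. (1 + b2 j) * (?m x)\<^sup>2) x"
      by (rule SS.real_cond_exp_add) (use im im2 in auto)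
    moreover have "AE x in M. real_cond_exp M ?FS (\<lambda>x. b1 j * ?m x) x = b1 j * real_cond_exp M ?FS ?m x"
      by (rule SS.real_cond_exp_cmult[OF im])
    moreover have "AE x in M. real_cond_exp M ?FS (\<lambda>x. (1 + b2 j) * (?m x)\<^sup>2) x
       = (1 + b2 j) * real_cond_exp M ?FS (\<lambda>x. (?m x)\<^sup>2) x"
      by (rule SS.real_cond_exp_cmult[OF im2])
    ultimately show ?thesis by eventually_elim simp
  qed
  have nz: "AE x in M. b1 j + b2 j * ?mS x \<noteq> 0"
    using assms(6) jV SNd unfolding condition1_def cexp_def by auto
  define K where "K = prob_space.expectation M (\<lambda>x. (omega M X b1 b2 j S x)\<^sup>2
              * cvar M X S (cexp M X (parents E j) (X j)) x)"
  let ?L = "\<lambda>x. cvar M X S (\<lambda>w. omega M X b1 b2 j S w * X j w) x"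
  let ?R = "\<lambda>x. w x * ?mS x + (1 + b2 j) * ((omega M X b1 b2 j S x)\<^sup>2
              * cvar M X S (cexp M X (parents E j) (X j)) x)"
  have AEmain: "AE x in M. ?L x = ?R x"
    using A1 A2 A3 A4 T1 T2 nz
  proof eventually_elim
    case (elim x)
    let ?d = "b1 j + b2 j * ?mS x"
    have wd: "w x * ?d = 1" using elim(7) unfolding w_def by simp
    have e: "real_cond_exp M ?FS (\<lambda>x. (X j x)\<^sup>2) x = b1 j * real_cond_exp M ?FS ?m x
        + (1 + b2 j) * real_cond_exp M ?FS (\<lambda>x. (?m x)\<^sup>2) x"
      using elim(6) elim(3) elim(4) by simp
    show ?case unfolding w_eq cvar_def cexp_def
      by (rule alg[OF wd elim(5) e elim(1) elim(2)])
  qed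
  have Lm: "?L \<in> borel_measurable M" unfolding cvar_def cexp_def by measurable
  have iK: "integrable M (\<lambda>x. (omega M X b1 b2 j S x)\<^sup>2 * cvar M X S (cexp M X (parents E j) (X j)) x)"
    by (rule assms(9)[OF SNd])
  have Km: "(\<lambda>x. (omega M X b1 b2 j S x)\<^sup>2 * cvar M X S (cexp M X (parents E j) (X j)) x) \<in> borel_measurable M"
    using iK by auto
  have iwm: "integrable M (\<lambda>x. w x * ?mS x)"
  proof -
    have "integrable M (real_cond_exp M ?FS (\<lambda>x. w x * X j x))" using iwY by auto
    then show ?thesis using A1 by (subst integrable_cong_AE[symmetric]) auto
  qed
  have Iwm: "(\<integral>x. w x * ?mS x \<partial>M) = (\<integral>x. omega M X b1 b2 j S x * X j x \<partial>M)"
  proof -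
    have "(\<integral>x. w x * ?mS x \<partial>M) = (\<integral>x. real_cond_exp M ?FS (\<lambda>x. w x * X j x) x \<partial>M)"
      by (rule integral_cong_AE) (use A1 in \<open>auto elim!: AE_mp\<close>)
    also have "\<dots> = (\<integral>x. w x * X j x \<partial>M)" using iwY by (rule SS.real_cond_exp_int(2))
    finally show ?thesis by (simp add: w_eq)
  qed
  have LR: "(\<integral>x. ?L x \<partial>M) = (\<integral>x. omega M X b1 b2 j S x * X j x \<partial>M) + (1 + b2 j) * K"
  proof -
    have "(\<integral>x. ?L x \<partial>M) = (\<integral>x. ?R x \<partial>M)"
      by (rule integral_cong_AE[OF Lm _ AEmain]) (use iwm iK in auto)
    also have "\<dots> = (\<integral>x. w x * ?mS x \<partial>M) + (1 + b2 j) * K"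
      unfolding K_def using iwm iK by simp
    finally show ?thesis using Iwm by simp
  qed
  have "(K > 0 \<and> \<not> ?Pa \<subseteq> S) \<or> (K = 0 \<and> ?Pa \<subseteq> S)"
  proof (cases "?Pa \<subseteq> S")
    case True
    have mF[measurable]: "?m \<in> borel_measurable ?FS"
      by (rule measurable_from_subalg[OF gs_mono[OF True]]) simp
    have e1: "AE x in M. real_cond_exp M ?FS ?m x = ?m x" by (rule SS.real_cond_exp_F_meas[OF im mF])
    have e2: "AE x in M. real_cond_exp M ?FS (\<lambda>x. (?m x)\<^sup>2) x = (?m x)\<^sup>2"
      by (rule SS.real_cond_exp_F_meas[OF im2]) simp
    have "K = (\<integral>x. 0 \<partial>M)" unfolding K_def
      by (rule integral_cong_AE[OF Km]) (use e1 e2 in \<open>auto simp: cvar_def cexp_def elim!: AE_mp\<close>)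
    then show ?thesis using True by simp
  next
    case False
    then show ?thesis using assms(6) jV SNd unfolding condition1_def K_def by auto
  qed
  then show ?thesis unfolding LR using assms(11)
    by (auto simp: add_pos_pos mult_pos_pos)
qed

end
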